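(* Let $(a_1,a_2)\in\mathbb{Z}^2$ and let $x=x_1^{-a_1}x_2^{-a_2}\sum_{p,q\ge0}c(p,q)x_1^px_2^q\in\mathcal{T}_1$ be pointed at $(a_1,a_2)$, and suppose $x\in\mathcal{T}_0^{\ge0}\cap\mathcal{T}_1^{\ge0}\cap\mathcal{T}_2^{\ge0}$. Then for all $(p,q)\in\mathbb{Z}_{\ge0}^2$ the following inequality holds in $\Bbbk$: $$c(p,q)\ge\max\Big(\Big[\sum_{k=1}^p\sum_{(k_1,\ldots,k_{d_2})\vdash k}(-1)^{k-1}c(p-k_1-2k_2-\cdots-d_2k_{d_2},q)\varrho_1^{k_1}\cdots\varrho_{d_2}^{k_{d_2}}\binom{a_2-q+k-1}{a_2-q-1,k_1,\ldots,k_{d_2}}\Big]_+,$$ $$\Big[\sum_{\ell=1}^q\sum_{(\ell_1,\ldots,\ell_{d_1})\vdash\ell}(-1)^{\ell-1}c(p,q-\ell_1-2\ell_2-\cdots-d_1\ell_{d_1})\rho_1^{\ell_1}\cdots\rho_{d_1}^{\ell_{d_1}}\binom{a_1-p+\ell-1}{a_1-p-1,\ell_1,\ldots,\ell_{d_1}}\Big]_+\Big).$$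
   Context: $\Bbbk$ is an ordered field with positive cone $\Pi$ ($a\le b$ iff $b-a\in\Pi$), $[a]_+=\max(a,0)$. $P_1(z)=\sum_{t=0}^{d_1}\rho_tz^t$ and $P_2(z)=\sum_{t=0}^{d_2}\varrho_tz^t$ in $\Pi[z]$ are monic palindromic ($P(z)=z^dP(z^{-1})$, $d=\deg P$). With $x_1,x_2$ commuting indeterminates, define $x_k\in\Bbbk(x_1,x_2)$ for $k\in\mathbb{Z}$ by $x_{k+1}x_{k-1}=P_1(x_k)$ if $k$ even, $=P_2(x_k)$ if $k$ odd. $\underline\Bbbk$ is the $\mathbb{Z}$-subalgebra of $\Bbbk$ generated by the coefficients of $P_1,P_2$, $\underline\Bbbk_{\ge0}=\underline\Bbbk\cap\Pi$, $\mathcal{T}_k=\underline\Bbbk[x_k^{\pm1},x_{k+1}^{\pm1}]$, $\mathcal{T}_k^{\ge0}=\underline\Bbbk_{\ge0}[x_k^{\pm1},x_{k+1}^{\pm1}]$. Pointed at $(a_1,a_2)$ means $c(p,q)\in\underline\Bbbk$ and $c(0,0)=1$; set $c(p,q)=0$ if $p<0$ or $q<0$. Multinomial convention: for integers $n,k_0$ and $k_1,\dots,k_r\ge0$ with $k=\sum_{i\ge1}k_i$ and $n=k_0+k$, $\binom{n}{k_0,k_1,\dots,k_r}=\binom{n}{k}\frac{k!}{k_1!\cdots k_r!}$ with $\binom{n}{k}=n(n-1)\cdots(n-k+1)/k!$; $(k_1,\dots,k_r)\vdash k$ means nonnegative integers summing to $k$. *)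

theory Defs
  imports "HOL-Computational_Algebra.Polynomial" "HOL-Computational_Algebra.Fraction_Field"
begin

text \<open>Rational function field k(x1,x2) is rendered as the fraction field of k[x1][x2].
  The constant embedding of k, and the two indeterminates.\<close>

type_synonym 'a ratfun2 = "'a poly poly fract"

definition rf_const :: "'a::idom \<Rightarrow> 'a ratfun2" where
  "rf_const c = Fract [:[:c:]:] 1"

definition rf_x1 :: "'a::idom ratfun2" where
  "rf_x1 = Fract [:[:0, 1:]:] 1"

definition rf_x2 :: "'a::idom ratfun2" where
  "rf_x2 = Fract [:0, 1:] 1"

definition monic_palindromic_pos :: "'a::linordered_field poly \<Rightarrow> bool" where
  "monic_palindromic_pos P \<longleftrightarrow> lead_coeff P = 1 \<and> (\<forall>i. coeff P i \<ge> 0) \<and>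
     (\<forall>i\<le>degree P. coeff P i = coeff P (degree P - i))"

text \<open>Forward / backward iteration of the recurrence
  x_{k+1} x_{k-1} = P1(x_k) (k even), P2(x_k) (k odd), starting from u = x_1, v = x_2.
  clus_fwd n = (x_{n+1}, x_{n+2}),  clus_bwd n = (x_{1-n}, x_{2-n}).\<close>
fun clus_fwd :: "'a::field poly \<Rightarrow> 'a poly \<Rightarrow> 'a \<Rightarrow> 'a \<Rightarrow> nat \<Rightarrow> 'a \<times> 'a" where
  "clus_fwd P1 P2 u v 0 = (u, v)"
| "clus_fwd P1 P2 u v (Suc n) =
     (case clus_fwd P1 P2 u v n of (a, b) \<Rightarrow> (b, poly (if even n then P1 else P2) b / a))"

fun clus_bwd :: "'a::field poly \<Rightarrow> 'a poly \<Rightarrow> 'a \<Rightarrow> 'a \<Rightarrow> nat \<Rightarrow> 'a \<times> 'a" where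
  "clus_bwd P1 P2 u v 0 = (u, v)"
| "clus_bwd P1 P2 u v (Suc n) =
     (case clus_bwd P1 P2 u v n of (a, b) \<Rightarrow> (poly (if odd n then P1 else P2) a / b, a))"

definition clus_seq :: "'a::field poly \<Rightarrow> 'a poly \<Rightarrow> 'a \<Rightarrow> 'a \<Rightarrow> int \<Rightarrow> 'a" where
  "clus_seq P1 P2 u v k =
     (if k \<ge> 1 then fst (clus_fwd P1 P2 u v (nat (k - 1)))
      else fst (clus_bwd P1 P2 u v (nat (1 - k))))"

definition xvar :: "'a::linordered_field poly \<Rightarrow> 'a poly \<Rightarrow> int \<Rightarrow> 'a ratfun2" where
  "xvar P1 P2 k = clus_seq (map_poly rf_const P1) (map_poly rf_const P2) rf_x1 rf_x2 k"

inductive_set coeff_alg :: "'a::linordered_field poly \<Rightarrow> 'a poly \<Rightarrow> 'a set"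
  for P1 P2 where
  one: "1 \<in> coeff_alg P1 P2"
| c1: "coeff P1 i \<in> coeff_alg P1 P2"
| c2: "coeff P2 i \<in> coeff_alg P1 P2"
| add: "a \<in> coeff_alg P1 P2 \<Longrightarrow> b \<in> coeff_alg P1 P2 \<Longrightarrow> a + b \<in> coeff_alg P1 P2"
| neg: "a \<in> coeff_alg P1 P2 \<Longrightarrow> - a \<in> coeff_alg P1 P2"
| mult: "a \<in> coeff_alg P1 P2 \<Longrightarrow> b \<in> coeff_alg P1 P2 \<Longrightarrow> a * b \<in> coeff_alg P1 P2"

definition coeff_alg_nonneg :: "'a::linordered_field poly \<Rightarrow> 'a poly \<Rightarrow> 'a set" where
  "coeff_alg_nonneg P1 P2 = coeff_alg P1 P2 \<inter> {c. c \<ge> 0}"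

definition in_laurent :: "'a::linordered_field poly \<Rightarrow> 'a poly \<Rightarrow> 'a set \<Rightarrow> int \<Rightarrow> 'a ratfun2 \<Rightarrow> bool" where
  "in_laurent P1 P2 R k y \<longleftrightarrow>
     (\<exists>f :: int \<times> int \<Rightarrow> 'a. finite {e. f e \<noteq> 0} \<and> (\<forall>e. f e \<in> R) \<and>
        y = (\<Sum>(i, j)\<in>{e. f e \<noteq> 0}.
               rf_const (f (i, j)) * xvar P1 P2 k powi i * xvar P1 P2 (k + 1) powi j))"

definition cext :: "(nat \<Rightarrow> nat \<Rightarrow> 'a::zero) \<Rightarrow> int \<Rightarrow> int \<Rightarrow> 'a" where
  "cext c p q = (if p < 0 \<or> q < 0 then 0 else c (nat p) (nat q))"

definition compositions :: "nat \<Rightarrow> nat \<Rightarrow> (nat \<Rightarrow> nat) set" where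
  "compositions r k = {ks. (\<forall>i. i \<notin> {1..r} \<longrightarrow> ks i = 0) \<and> (\<Sum>i=1..r. ks i) = k}"

text \<open>Multinomial (n; n-k, k_1,...,k_r) = binom(n,k) * k!/(k_1!...k_r!), k = sum k_i.\<close>
definition multinom :: "int \<Rightarrow> nat \<Rightarrow> (nat \<Rightarrow> nat) \<Rightarrow> 'a::field_char_0" where
  "multinom n r ks = (let k = (\<Sum>i=1..r. ks i) in
     ((of_int n :: 'a) gchoose k) * (fact k / (\<Prod>i=1..r. fact (ks i))))"

definition pos_part :: "'a::linordered_field \<Rightarrow> 'a" where
  "pos_part a = max a 0"

end

theory Submission
  imports Defs "HOL-Computational_Algebra.Polynomial_FPS" "HOL-Computational_Algebra.Polynomial_Factorial"
begin

unbundle fps_syntax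


lemma comp_finite: "finite (compositions r k)"
proof -
  have "compositions r k \<subseteq> {f. \<forall>x. (x \<in> {1..r} \<longrightarrow> f x \<in> {0..k}) \<and> (x \<notin> {1..r} \<longrightarrow> f x = 0)}"
  proof
    fix ks assume "ks \<in> compositions r k"
    hence a: "\<forall>i. i \<notin> {1..r} \<longrightarrow> ks i = 0" and b: "(\<Sum>i=1..r. ks i) = k" by (auto simp: compositions_def)
    have "ks i \<le> k" if "i \<in> {1..r}" for i using member_le_sum[of i "{1..r}" ks] that b by auto
    thus "ks \<in> {f. \<forall>x. (x \<in> {1..r} \<longrightarrow> f x \<in> {0..k}) \<and> (x \<notin> {1..r} \<longrightarrow> f x = 0)}" using a by auto
  qed
  thus ?thesis by (rule finite_subset) (rule finite_set_of_finite_funs; simp)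
qed

lemma comp_0: "compositions 0 k = (if k = 0 then {\<lambda>_. 0} else {})"
  by (auto simp: compositions_def)

lemma comp_k0: "compositions r 0 = {\<lambda>_. 0}"
  by (auto simp: compositions_def fun_eq_iff) (metis atLeastAtMost_iff)

definition Qr :: "(nat \<Rightarrow> 'a::comm_ring_1) \<Rightarrow> nat \<Rightarrow> 'a poly" where
  "Qr \<rho> r = (\<Sum>i=1..r. monom (\<rho> i) i)"

definition mc :: "(nat \<Rightarrow> 'a::field_char_0) \<Rightarrow> nat \<Rightarrow> (nat \<Rightarrow> nat) \<Rightarrow> 'a" where
  "mc \<rho> r ks = fact (\<Sum>i=1..r. ks i) / (\<Prod>i=1..r. fact (ks i)) * (\<Prod>i=1..r. \<rho> i ^ ks i)"

definition wt :: "nat \<Rightarrow> (nat \<Rightarrow> nat) \<Rightarrow> nat" where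
  "wt r ks = (\<Sum>i=1..r. i * ks i)"

lemma comp_bij: "bij_betw (\<lambda>(t, ks'). ks'(Suc r := t)) (SIGMA t:{..k}. compositions r (k - t)) (compositions (Suc r) k)"
proof (rule bij_betw_byWitness[where f' = "\<lambda>ks. (ks (Suc r), ks(Suc r := 0))"])
  show "\<forall>a\<in>(SIGMA t:{..k}. compositions r (k - t)). (\<lambda>ks. (ks (Suc r), ks(Suc r := 0))) ((\<lambda>(t, ks'). ks'(Suc r := t)) a) = a"
    by (auto simp: compositions_def fun_eq_iff)
  show "\<forall>a'\<in>compositions (Suc r) k. (\<lambda>(t, ks'). ks'(Suc r := t)) ((\<lambda>ks. (ks (Suc r), ks(Suc r := 0))) a') = a'"
    by auto
  show "(\<lambda>(t, ks'). ks'(Suc r := t)) ` (SIGMA t:{..k}. compositions r (k - t)) \<subseteq> compositions (Suc r) k"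
  proof clarsimp
    fix t ks' assume "t \<le> k" "ks' \<in> compositions r (k - t)"
    moreover have "(\<Sum>i=1..r. (ks'(Suc r := t)) i) = (\<Sum>i=1..r. ks' i)" by (rule sum.cong) auto
    ultimately show "ks'(Suc r := t) \<in> compositions (Suc r) k"
      by (auto simp: compositions_def)
  qed
  show "(\<lambda>ks. (ks (Suc r), ks(Suc r := 0))) ` compositions (Suc r) k \<subseteq> (SIGMA t:{..k}. compositions r (k - t))"
  proof clarsimp
    fix ks assume h: "ks \<in> compositions (Suc r) k"
    have s: "(\<Sum>i=1..r. (ks(Suc r := 0)) i) = (\<Sum>i=1..r. ks i)" by (rule sum.cong) auto
    from h have "(\<Sum>i=1..r. ks i) + ks (Suc r) = k" by (auto simp: compositions_def)
    with h s show "ks (Suc r) \<le> k \<and> ks(Suc r := 0) \<in> compositions r (k - ks (Suc r))"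
      by (auto simp: compositions_def)
  qed
qed

lemma ofnat_monom: "(of_nat m :: 'a::comm_ring_1 poly) * monom a n = monom (of_nat m * a) n"
  by (simp add: of_nat_poly smult_monom)

lemma multinomial:
  fixes \<rho> :: "nat \<Rightarrow> 'a::field_char_0"
  shows "Qr \<rho> r ^ k = (\<Sum>ks\<in>compositions r k. monom (mc \<rho> r ks) (wt r ks))"
proof (induction r arbitrary: k)
  case 0
  then show ?case by (cases k) (simp_all add: Qr_def comp_0 mc_def wt_def)
next
  case (Suc r)
  have Q: "Qr \<rho> (Suc r) = monom (\<rho> (Suc r)) (Suc r) + Qr \<rho> r"
    by (simp add: Qr_def)
  have pt: "monom (of_nat (k choose t) * \<rho> (Suc r) ^ t * mc \<rho> r ks') (Suc r * t + wt r ks')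
      = monom (mc \<rho> (Suc r) (ks'(Suc r := t))) (wt (Suc r) (ks'(Suc r := t)))"
    if "t \<le> k" "ks' \<in> compositions r (k - t)" for t ks'
  proof -
    have e1: "(\<Sum>i=1..r. (ks'(Suc r := t)) i) = (\<Sum>i=1..r. ks' i)" by (rule sum.cong) auto
    have e2: "(\<Sum>i=1..r. i * (ks'(Suc r := t)) i) = (\<Sum>i=1..r. i * ks' i)" by (rule sum.cong) auto
    have e3: "(\<Prod>i=1..r. fact ((ks'(Suc r := t)) i) :: 'a) = (\<Prod>i=1..r. fact (ks' i))" by (rule prod.cong) auto
    have e4: "(\<Prod>i=1..r. \<rho> i ^ (ks'(Suc r := t)) i) = (\<Prod>i=1..r. \<rho> i ^ ks' i)" by (rule prod.cong) auto
    have sk: "(\<Sum>i=1..r. ks' i) = k - t" using that(2) by (simp add: compositions_def)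
    have nz: "(\<Prod>i=1..r. fact (ks' i) :: 'a) \<noteq> 0" by (simp add: prod_zero_iff)
    have "mc \<rho> (Suc r) (ks'(Suc r := t)) = fact k / ((\<Prod>i=1..r. fact (ks' i)) * fact t) * ((\<Prod>i=1..r. \<rho> i ^ ks' i) * \<rho> (Suc r) ^ t)"
      unfolding mc_def using e1 e3 e4 sk that(1) by (simp add: sum.cl_ivl_Suc prod.cl_ivl_Suc)
    also have "\<dots> = of_nat (k choose t) * \<rho> (Suc r) ^ t * mc \<rho> r ks'"
      unfolding mc_def sk binomial_fact[OF that(1)] using nz by (simp add: field_simps)
    finally have m: "mc \<rho> (Suc r) (ks'(Suc r := t)) = of_nat (k choose t) * \<rho> (Suc r) ^ t * mc \<rho> r ks'" .
    have w: "wt (Suc r) (ks'(Suc r := t)) = Suc r * t + wt r ks'"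
      unfolding wt_def using e2 by (simp add: sum.cl_ivl_Suc)
    show ?thesis using m w by simp
  qed
  have "Qr \<rho> (Suc r) ^ k = (\<Sum>t\<le>k. of_nat (k choose t) * monom (\<rho> (Suc r)) (Suc r) ^ t * Qr \<rho> r ^ (k - t))"
    unfolding Q by (rule binomial_ring)
  also have "\<dots> = (\<Sum>t\<le>k. \<Sum>ks'\<in>compositions r (k - t).
       monom (of_nat (k choose t) * \<rho> (Suc r) ^ t * mc \<rho> r ks') (Suc r * t + wt r ks'))"
    by (simp add: Suc.IH monom_power sum_distrib_left mult_monom ofnat_monom mult.assoc)
  also have "\<dots> = (\<Sum>(t, ks')\<in>(SIGMA t:{..k}. compositions r (k - t)).
       monom (of_nat (k choose t) * \<rho> (Suc r) ^ t * mc \<rho> r ks') (Suc r * t + wt r ks'))"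
    by (rule sum.Sigma) (auto simp: comp_finite)
  also have "\<dots> = (\<Sum>(t, ks')\<in>(SIGMA t:{..k}. compositions r (k - t)).
       monom (mc \<rho> (Suc r) (ks'(Suc r := t))) (wt (Suc r) (ks'(Suc r := t))))"
    by (rule sum.cong[OF refl], clarify, rule pt) auto
  also have "\<dots> = (\<Sum>ks\<in>compositions (Suc r) k. monom (mc \<rho> (Suc r) ks) (wt (Suc r) ks))"
    using sum.reindex_bij_betw[OF comp_bij[of r k], of "\<lambda>ks. monom (mc \<rho> (Suc r) ks) (wt (Suc r) ks)"]
    by (simp add: case_prod_unfold)
  finally show ?case .
qed

lemma coeff_Qr: "coeff (Qr \<rho> r) j = (if 1 \<le> j \<and> j \<le> r then \<rho> j else 0)"
  by (simp add: Qr_def coeff_sum)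

lemma ext_nat: "(if int p - int w < 0 then 0 else g (nat (int p - int w))) = (if p < w then 0 else g (p - w))"
  by (simp add: nat_diff_distrib)

lemma abstract_ineq:
  fixes P :: "'a::linordered_field poly" and g :: "nat \<Rightarrow> 'a" and D :: "'a fps"
    and n :: int and K K' :: nat
  assumes P0: "coeff P 0 = 1" and Dnn: "\<forall>i. D $ i \<ge> 0" and nK: "n + int K \<ge> 0"
    and eq: "fps_X ^ K' * fps_of_poly P ^ K * Abs_fps g = fps_of_poly P ^ nat (n + int K) * D"
  shows "(\<Sum>k=1..p. \<Sum>ks\<in>compositions (degree P) k.
        (-1) ^ (k - 1) * (if int p - int (\<Sum>i=1..degree P. i * ks i) < 0 then 0
                          else g (nat (int p - int (\<Sum>i=1..degree P. i * ks i))))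
        * (\<Prod>i=1..degree P. coeff P i ^ ks i)
        * multinom (n + int k - 1) (degree P) ks) \<le> g p"
proof -
  define d where "d = degree P"
  define \<rho> where "\<rho> = coeff P"
  define Qf where "Qf = fps_of_poly (Qr \<rho> d)"
  define F where "F = fps_of_poly P"
  define Y where "Y = fps_binomial (of_int (- n)) oo Qf"
  define A where "A = Abs_fps g"
  have Q0: "Qf $ 0 = 0" by (simp add: Qf_def coeff_Qr)
  have F1: "F = 1 + Qf"
  proof (rule fps_ext)
    fix j
    show "F $ j = (1 + Qf) $ j"
    proof (cases "j = 0")
      case True then show ?thesis using P0 by (simp add: F_def Qf_def coeff_Qr)
    next
      case False
      then show ?thesis
        by (auto simp: F_def Qf_def coeff_Qr \<rho>_def d_def coeff_eq_0)
    qed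
  qed
  have Bnat: "fps_binomial (of_nat m) oo Qf = F ^ m" for m
  proof -
    have "fps_binomial (of_nat m) oo Qf = ((1 + fps_X) oo Qf) ^ m"
      by (simp add: fps_binomial_of_nat fps_compose_power[OF Q0])
    also have "(1 + fps_X) oo Qf = F" by (simp add: F1 fps_compose_add_distrib Q0)
    finally show ?thesis .
  qed
  have YF: "Y * F ^ nat (n + int K) = F ^ K"
  proof -
    have "Y * F ^ nat (n + int K) = (fps_binomial (of_int (- n)) * fps_binomial (of_nat (nat (n + int K)))) oo Qf"
      by (simp add: Y_def Bnat[symmetric] fps_compose_mult_distrib[OF Q0])
    also have "fps_binomial (of_int (- n)) * fps_binomial (of_nat (nat (n + int K))) = fps_binomial (of_nat K)"
      using nK by (simp add: fps_binomial_add_mult[symmetric])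
    finally show ?thesis by (simp add: Bnat)
  qed
  have FK0: "F ^ K \<noteq> 0"
  proof -
    have "(F ^ K) $ 0 = 1" by (simp add: F1 Q0 fps_nth_power_0)
    thus ?thesis by (metis fps_zero_nth zero_neq_one)
  qed
  have "F ^ K * (fps_X ^ K' * (A * Y)) = F ^ K * D"
  proof -
    have "F ^ K * (fps_X ^ K' * (A * Y)) = (fps_X ^ K' * F ^ K * A) * Y" by (simp add: ac_simps)
    also have "\<dots> = F ^ nat (n + int K) * D * Y" using eq by (simp add: A_def F_def)
    also have "\<dots> = F ^ K * D" using YF by (simp add: ac_simps)
    finally show ?thesis .
  qed
  hence XAY: "fps_X ^ K' * (A * Y) = D" using FK0 mult_left_cancel by blast
  have AYnn: "(A * Y) $ p \<ge> 0"
    using Dnn fps_X_power_mult_nth[of K' "A * Y" "p + K'"] XAY by (metis add_diff_cancel_right' not_add_less2)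
  define G where "G ks = (if p < wt d ks then 0 else g (p - wt d ks))" for ks
  define bn where "bn k = (of_int (- n) :: 'a) gchoose k" for k
  have Qk: "(Qf ^ k) $ j = (\<Sum>ks\<in>compositions d k. if wt d ks = j then mc \<rho> d ks else 0)" for k j
    by (simp add: Qf_def fps_of_poly_power[symmetric] multinomial coeff_sum)
  have Yj: "Y $ j = (\<Sum>k=0..p. bn k * (Qf ^ k) $ j)" if "j \<le> p" for j
  proof -
    have "Y $ j = (\<Sum>k=0..j. bn k * (Qf ^ k) $ j)" by (simp add: Y_def fps_compose_nth bn_def)
    also have "\<dots> = (\<Sum>k=0..p. bn k * (Qf ^ k) $ j)"
    proof (rule sum.mono_neutral_left)
      show "\<forall>i\<in>{0..p} - {0..j}. bn i * (Qf ^ i) $ j = 0"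
        using startsby_zero_power_prefix[OF Q0] by auto
    qed (use that in auto)
    finally show ?thesis .
  qed
  have T: "(\<Sum>ks\<in>compositions d k. G ks * mc \<rho> d ks) = (\<Sum>j=0..p. g (p - j) * (Qf ^ k) $ j)" for k
  proof -
    have "(\<Sum>j=0..p. g (p - j) * (Qf ^ k) $ j)
        = (\<Sum>ks\<in>compositions d k. \<Sum>j=0..p. if wt d ks = j then g (p - j) * mc \<rho> d ks else 0)"
      unfolding Qk sum_distrib_left by (subst sum.swap) (simp add: if_distrib cong: if_cong)
    also have "\<dots> = (\<Sum>ks\<in>compositions d k. G ks * mc \<rho> d ks)"
      by (rule sum.cong[OF refl]) (simp add: G_def sum.delta)
    finally show ?thesis by simp
  qed
  have AY: "(A * Y) $ p = (\<Sum>k=0..p. bn k * (\<Sum>ks\<in>compositions d k. G ks * mc \<rho> d ks))"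
  proof -
    have "(A * Y) $ p = (\<Sum>i=0..p. g i * Y $ (p - i))" by (simp add: fps_mult_nth A_def)
    also have "\<dots> = (\<Sum>j=0..p. g (p - j) * Y $ j)"
      by (subst sum.atLeastAtMost_rev) simp
    also have "\<dots> = (\<Sum>j=0..p. \<Sum>k=0..p. bn k * (g (p - j) * (Qf ^ k) $ j))"
      by (rule sum.cong[OF refl]) (simp add: Yj sum_distrib_left ac_simps)
    also have "\<dots> = (\<Sum>k=0..p. bn k * (\<Sum>j=0..p. g (p - j) * (Qf ^ k) $ j))"
      by (subst sum.swap) (simp add: sum_distrib_left)
    finally show ?thesis by (simp add: T)
  qed
  have trm: "(-1) ^ (k - 1) * (if int p - int (\<Sum>i=1..d. i * ks i) < 0 then 0
                          else g (nat (int p - int (\<Sum>i=1..d. i * ks i))))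
        * (\<Prod>i=1..d. \<rho> i ^ ks i) * multinom (n + int k - 1) d ks
      = - (bn k * (G ks * mc \<rho> d ks))" if "k \<ge> 1" "ks \<in> compositions d k" for k ks
  proof -
    have sk: "(\<Sum>i=1..d. ks i) = k" using that(2) by (simp add: compositions_def)
    have G': "(if int p - int (\<Sum>i=1..d. i * ks i) < 0 then 0
                          else g (nat (int p - int (\<Sum>i=1..d. i * ks i)))) = G ks"
      unfolding ext_nat by (simp add: G_def wt_def)
    have gm: "bn k = (-1) ^ k * ((of_int n + of_nat k - 1) gchoose k)"
      unfolding bn_def of_int_minus by (rule gbinomial_minus)
    have pw: "(-1 :: 'a) ^ (k - 1) = - ((-1) ^ k)"
      using that(1) by (cases k) auto
    show ?thesis
      unfolding G' multinom_def mc_def Let_def sk gm pw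
      by (simp add: ac_simps)
  qed
  have "g p - (\<Sum>k=1..p. \<Sum>ks\<in>compositions d k.
        (-1) ^ (k - 1) * (if int p - int (\<Sum>i=1..d. i * ks i) < 0 then 0
                          else g (nat (int p - int (\<Sum>i=1..d. i * ks i))))
        * (\<Prod>i=1..d. \<rho> i ^ ks i) * multinom (n + int k - 1) d ks)
      = g p + (\<Sum>k=1..p. bn k * (\<Sum>ks\<in>compositions d k. G ks * mc \<rho> d ks))"
  proof -
    have "(\<Sum>k=1..p. \<Sum>ks\<in>compositions d k.
        (-1) ^ (k - 1) * (if int p - int (\<Sum>i=1..d. i * ks i) < 0 then 0
                          else g (nat (int p - int (\<Sum>i=1..d. i * ks i))))
        * (\<Prod>i=1..d. \<rho> i ^ ks i) * multinom (n + int k - 1) d ks)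
      = (\<Sum>k=1..p. \<Sum>ks\<in>compositions d k. - (bn k * (G ks * mc \<rho> d ks)))"
      by (rule sum.cong[OF refl], rule sum.cong[OF refl], rule trm) auto
    thus ?thesis by (simp add: sum_distrib_left sum_negf)
  qed
  also have "\<dots> = (A * Y) $ p"
    unfolding AY by (simp add: sum.atLeast_Suc_atMost comp_k0 bn_def G_def wt_def mc_def)
  finally show ?thesis using AYnn unfolding d_def \<rho>_def by simp
qed



definition L2 :: "'a::comm_ring_1 poly \<Rightarrow> 'a poly poly" where
  "L2 V = map_poly (\<lambda>a. [:a:]) V"

lemma coeff_L2: "coeff (L2 V) n = [:coeff V n:]"
  by (simp add: L2_def coeff_map_poly)

lemma const_add: "[:a + b:] = [:a:] + [:b:]" by (simp add: add_pCons)

lemma pCons_sum: "[:sum f A:] = (\<Sum>x\<in>A. [:f x:])"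
  by (induction A rule: infinite_finite_induct) (auto simp: const_add)

lemma L2_add: "L2 (V + W) = L2 V + L2 W"
  by (rule poly_eqI) (simp add: coeff_L2)

lemma L2_mult: "L2 (V * W) = L2 V * L2 W"
  by (rule poly_eqI) (simp add: coeff_L2 coeff_mult pCons_sum mult.commute)

lemma L2_1: "L2 1 = 1"
  by (rule poly_eqI) (simp add: coeff_L2 coeff_1)

lemma L2_power: "L2 (V ^ n) = L2 V ^ n"
  by (induction n) (simp_all add: L2_1 L2_mult)

lemma L2_X: "L2 [:0, 1:] = [:0, 1:]"
  by (rule poly_eqI) (simp add: coeff_L2 coeff_pCons split: nat.split)

lemma L2_const: "L2 [:c:] = [:[:c:]:]"
  by (rule poly_eqI) (simp add: coeff_L2 coeff_pCons split: nat.split)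

lemma key_coeff: "coeff (coeff ([:U:] * L2 V) e) s = coeff U s * coeff V e"
  by (simp add: coeff_L2)

lemma key_coeff_sum:
  "coeff (coeff (\<Sum>t\<in>T. [:U t:] * L2 (V t)) e) s = (\<Sum>t\<in>T. coeff (U t) s * coeff (V t) e)"
  by (simp add: coeff_sum coeff_L2 mult.commute)

definition phi :: "'a::idom poly \<Rightarrow> 'a poly poly fract" where "phi U = to_fract [:U:]"
definition psi :: "'a::idom poly \<Rightarrow> 'a poly poly fract" where "psi V = to_fract (L2 V)"

lemma L1_mult: "[:U * W:] = [:U:] * [:W:]" by (simp add: mult.commute)
lemma phi_mult: "phi (U * W) = phi U * phi W" by (simp only: phi_def L1_mult to_fract_mult)
lemma psi_mult: "psi (U * W) = psi U * psi W" by (simp add: psi_def L2_mult)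
lemma phi_add: "phi (U + W) = phi U + phi W" by (simp only: phi_def const_add to_fract_add)
lemma phi_1: "phi 1 = 1" by (simp add: phi_def one_pCons[symmetric])
lemma phi_power: "phi (U ^ n) = phi U ^ n" by (induction n) (simp_all add: phi_1 phi_mult)
lemma psi_power: "psi (U ^ n) = psi U ^ n" by (induction n) (simp_all add: psi_def L2_1 L2_mult)
lemma phi_eq0: "phi U = 0 \<longleftrightarrow> U = 0" by (simp add: phi_def)
lemma psi_eq0: "psi U = 0 \<longleftrightarrow> U = 0"
proof -
  have "L2 U = 0 \<longleftrightarrow> U = 0"
    by (metis coeff_L2 leading_coeff_0_iff pCons_eq_0_iff coeff_0 poly_eqI)
  thus ?thesis by (simp add: psi_def)
qed

lemma to_fract_sum: "to_fract (sum f A) = (\<Sum>x\<in>A. to_fract (f x))"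
  by (induction A rule: infinite_finite_induct) auto

lemma rf_x1_phi: "rf_x1 = phi [:0, 1:]" by (simp add: rf_x1_def phi_def to_fract_def)
lemma rf_x2_psi: "rf_x2 = psi [:0, 1:]" by (simp add: rf_x2_def psi_def to_fract_def L2_X)
lemma rf_const_phi: "rf_const c = phi [:c:]" by (simp add: rf_const_def phi_def to_fract_def)
lemma rf_const_psi: "rf_const c = psi [:c:]" by (simp add: rf_const_def psi_def to_fract_def L2_const)

lemma phi_monom: "phi (monom 1 m) = rf_x1 ^ m"
  by (simp add: rf_x1_phi phi_power[symmetric] monom_altdef)
lemma psi_monom: "psi (monom 1 m) = rf_x2 ^ m"
  by (simp add: rf_x2_psi psi_power[symmetric] monom_altdef)

lemma poly_phi: "poly (map_poly rf_const P) rf_x1 = phi P"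
proof (induction P)
  case (pCons a p)
  have "pCons a p = [:a:] + [:0, 1:] * p" by simp
  hence "phi (pCons a p) = phi [:a:] + phi [:0,1:] * phi p" by (metis phi_add phi_mult)
  moreover have "map_poly rf_const (pCons a p) = pCons (rf_const a) (map_poly rf_const p)"
    by (rule map_poly_pCons) (simp add: rf_const_def Zero_fract_def)
  ultimately have "poly (map_poly rf_const (pCons a p)) rf_x1 = rf_const a + rf_x1 * poly (map_poly rf_const p) rf_x1" by simp
  also have "\<dots> = rf_const a + rf_x1 * phi p" by (simp only: pCons.IH)
  also have "\<dots> = phi (pCons a p)" using `phi (pCons a p) = _` by (simp add: rf_const_phi rf_x1_phi)
  finally show ?case .
qed (simp add: phi_def)

lemma psi_add: "psi (U + W) = psi U + psi W" by (simp add: psi_def L2_add)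

lemma poly_psi: "poly (map_poly rf_const P) rf_x2 = psi P"
proof (induction P)
  case (pCons a p)
  have "pCons a p = [:a:] + [:0, 1:] * p" by simp
  hence "psi (pCons a p) = psi [:a:] + psi [:0,1:] * psi p" by (metis psi_add psi_mult)
  moreover have "map_poly rf_const (pCons a p) = pCons (rf_const a) (map_poly rf_const p)"
    by (rule map_poly_pCons) (simp add: rf_const_def Zero_fract_def)
  ultimately have "poly (map_poly rf_const (pCons a p)) rf_x2 = rf_const a + rf_x2 * poly (map_poly rf_const p) rf_x2" by simp
  also have "\<dots> = rf_const a + rf_x2 * psi p" by (simp only: pCons.IH)
  also have "\<dots> = psi (pCons a p)" using `psi (pCons a p) = _` by (simp add: rf_const_psi rf_x2_psi)
  finally show ?case .
next
  case 0 show ?case by (simp add: psi_def L2_def)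
qed

lemma xvar0: "xvar P1 P2 0 = phi P2 / rf_x2"
  by (simp add: xvar_def clus_seq_def poly_phi)
lemma xvar1: "xvar P1 P2 1 = rf_x1"
  by (simp add: xvar_def clus_seq_def)
lemma xvar2: "xvar P1 P2 2 = rf_x2"
  by (simp add: xvar_def clus_seq_def eval_nat_numeral)
lemma xvar3: "xvar P1 P2 3 = psi P1 / rf_x1"
  by (simp add: xvar_def clus_seq_def eval_nat_numeral poly_psi)



lemma powi_comb: "(z::'b::field) \<noteq> 0 \<Longrightarrow> m + int K \<ge> 0 \<Longrightarrow> z powi m * z ^ K = z ^ nat (m + int K)"
proof -
  assume z: "z \<noteq> 0" and m: "m + int K \<ge> 0"
  have "z powi m * z ^ K = z powi m * z powi (int K)" by (simp add: power_int_of_nat)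
  also have "\<dots> = z powi (m + int K)" using z by (simp add: power_int_add)
  also have "\<dots> = z powi (int (nat (m + int K)))" using m by simp
  also have "\<dots> = z ^ nat (m + int K)" by (simp only: power_int_of_nat)
  finally show ?thesis .
qed

lemma rf_x1_ne0: "(rf_x1 :: 'a::idom ratfun2) \<noteq> 0"
  by (simp add: rf_x1_phi phi_eq0)
lemma rf_x2_ne0: "(rf_x2 :: 'a::idom ratfun2) \<noteq> 0"
  by (simp add: rf_x2_psi psi_eq0)

lemma to_fract_term: "to_fract ([:U:] * L2 V) = phi U * psi V"
  by (simp only: phi_def psi_def to_fract_mult)

lemma lhs_expand:
  fixes c :: "nat \<Rightarrow> nat \<Rightarrow> 'a::idom" and x :: "'a ratfun2"
  assumes x: "x = rf_x1 powi (- a1) * rf_x2 powi (- a2) *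
                    (\<Sum>(p, q)\<in>Sc. rf_const (c p q) * rf_x1 ^ p * rf_x2 ^ q)"
    and K1: "a1 \<le> int K" and K2: "a2 \<le> int K"
  shows "x * phi W * psi W' * rf_x1 ^ K * rf_x2 ^ K =
    to_fract (\<Sum>t\<in>Sc. [:[:c (fst t) (snd t):] * monom 1 (fst t + nat (int K - a1)) * W:]
                       * L2 (monom 1 (snd t + nat (int K - a2)) * W'))"
proof -
  have e1: "rf_x1 powi (- a1) * rf_x1 ^ K = (rf_x1 :: 'a ratfun2) ^ nat (int K - a1)"
    using powi_comb[OF rf_x1_ne0, of "- a1" K] K1 by simp
  have e2: "rf_x2 powi (- a2) * rf_x2 ^ K = (rf_x2 :: 'a ratfun2) ^ nat (int K - a2)"
    using powi_comb[OF rf_x2_ne0, of "- a2" K] K2 by simp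
  have "x * phi W * psi W' * rf_x1 ^ K * rf_x2 ^ K =
     (rf_x1 powi (- a1) * rf_x1 ^ K) * (rf_x2 powi (- a2) * rf_x2 ^ K) * phi W * psi W' *
     (\<Sum>(p, q)\<in>Sc. rf_const (c p q) * rf_x1 ^ p * rf_x2 ^ q)"
    by (simp add: x ac_simps)
  also have "\<dots> = (\<Sum>t\<in>Sc. phi ([:c (fst t) (snd t):] * monom 1 (fst t + nat (int K - a1)) * W)
                       * psi (monom 1 (snd t + nat (int K - a2)) * W'))"
    unfolding e1 e2 sum_distrib_left
  proof (rule sum.cong[OF refl])
    fix t :: "nat \<times> nat"
    obtain p q where t: "t = (p, q)" by (cases t)
    show "rf_x1 ^ nat (int K - a1) * rf_x2 ^ nat (int K - a2) * phi W * psi W' *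
        (case t of (p, q) \<Rightarrow> rf_const (c p q) * rf_x1 ^ p * rf_x2 ^ q) =
        phi ([:c (fst t) (snd t):] * monom 1 (fst t + nat (int K - a1)) * W) *
        psi (monom 1 (snd t + nat (int K - a2)) * W')"
      unfolding t fst_conv snd_conv prod.case
      by (simp only: phi_mult psi_mult phi_monom psi_monom power_add rf_const_phi[symmetric])
         (simp only: ac_simps)
  qed
  also have "\<dots> = to_fract (\<Sum>t\<in>Sc. [:[:c (fst t) (snd t):] * monom 1 (fst t + nat (int K - a1)) * W:]
                       * L2 (monom 1 (snd t + nat (int K - a2)) * W'))"
    by (simp only: to_fract_sum to_fract_term)
  finally show ?thesis .
qed

lemma psi_1: "psi 1 = 1" by (simp add: psi_def L2_1)

lemma div_powi: "((a::'b::field) / b) powi i = a powi i * b powi (- i)"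
  by (subst power_int_divide_distrib) (simp only: divide_inverse power_int_minus)

lemma rhs0:
  fixes f :: "int \<times> int \<Rightarrow> 'a::idom" and x :: "'a ratfun2"
  assumes x: "x = (\<Sum>(i, j)\<in>S. rf_const (f (i, j)) * (phi P / rf_x2) powi i * rf_x1 powi j)"
    and P: "P \<noteq> 0" and B: "\<forall>(i, j)\<in>S. \<bar>i\<bar> \<le> int K \<and> \<bar>j\<bar> \<le> int K"
  shows "x * phi (P ^ K) * psi 1 * rf_x1 ^ K * rf_x2 ^ K =
    to_fract (\<Sum>t\<in>S. [:[:f t:] * P ^ nat (fst t + int K) * monom 1 (nat (snd t + int K)):]
        * L2 (monom 1 (nat (int K - fst t)) * 1))"
proof -
  have "x * phi (P ^ K) * psi 1 * rf_x1 ^ K * rf_x2 ^ K =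
     (\<Sum>t\<in>S. phi ([:f t:] * P ^ nat (fst t + int K) * monom 1 (nat (snd t + int K)))
        * psi (monom 1 (nat (int K - fst t)) * 1))"
    unfolding x sum_distrib_right
  proof (rule sum.cong[OF refl])
    fix t assume tS: "t \<in> S"
    obtain i j where t: "t = (i, j)" by (cases t)
    from B tS t have bi: "\<bar>i\<bar> \<le> int K" and bj: "\<bar>j\<bar> \<le> int K" by auto
    have ph: "phi P \<noteq> 0" using P by (simp add: phi_eq0)
    have e1: "phi P powi i * phi P ^ K = phi P ^ nat (i + int K)"
      using bi by (intro powi_comb ph) arith
    have e2: "rf_x1 powi j * rf_x1 ^ K = (rf_x1 :: 'a ratfun2) ^ nat (j + int K)"
      using bj by (intro powi_comb rf_x1_ne0) arith
    have e3: "rf_x2 powi (- i) * rf_x2 ^ K = (rf_x2 :: 'a ratfun2) ^ nat (- i + int K)"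
      using bi by (intro powi_comb rf_x2_ne0) arith
    have "(case t of (i, j) \<Rightarrow> rf_const (f (i, j)) * (phi P / rf_x2) powi i * rf_x1 powi j)
          * phi (P ^ K) * psi 1 * rf_x1 ^ K * rf_x2 ^ K
        = rf_const (f (i, j)) * (phi P powi i * phi P ^ K) * (rf_x1 powi j * rf_x1 ^ K)
           * (rf_x2 powi (- i) * rf_x2 ^ K)"
      unfolding t prod.case div_powi psi_1 phi_power by (simp only: ac_simps mult_1_right mult_1_left)
    also have "\<dots> = phi ([:f t:] * P ^ nat (fst t + int K) * monom 1 (nat (snd t + int K)))
        * psi (monom 1 (nat (int K - fst t)) * 1)"
      unfolding e1 e2 e3 t fst_conv snd_conv
      by (simp only: phi_mult psi_mult phi_monom psi_monom phi_power rf_const_phi[symmetric] psi_1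
           mult_1_right) (simp add: ac_simps)
    finally show "(case t of (i, j) \<Rightarrow> rf_const (f (i, j)) * (phi P / rf_x2) powi i * rf_x1 powi j)
          * phi (P ^ K) * psi 1 * rf_x1 ^ K * rf_x2 ^ K = phi ([:f t:] * P ^ nat (fst t + int K) * monom 1 (nat (snd t + int K)))
        * psi (monom 1 (nat (int K - fst t)) * 1)" .
  qed
  also have "\<dots> = to_fract (\<Sum>t\<in>S. [:[:f t:] * P ^ nat (fst t + int K) * monom 1 (nat (snd t + int K)):]
        * L2 (monom 1 (nat (int K - fst t)) * 1))"
    by (simp only: to_fract_sum to_fract_term)
  finally show ?thesis .
qed

lemma phi_1': "phi (1::'a::idom poly) = 1" by (rule phi_1)

lemma rhs1:
  fixes f :: "int \<times> int \<Rightarrow> 'a::idom" and x :: "'a ratfun2"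
  assumes x: "x = (\<Sum>(i, j)\<in>S. rf_const (f (i, j)) * rf_x1 powi i * rf_x2 powi j)"
    and B: "\<forall>(i, j)\<in>S. \<bar>i\<bar> \<le> int K \<and> \<bar>j\<bar> \<le> int K"
  shows "x * phi 1 * psi 1 * rf_x1 ^ K * rf_x2 ^ K =
    to_fract (\<Sum>t\<in>S. [:[:f t:] * monom 1 (nat (fst t + int K)) * 1:]
        * L2 (monom 1 (nat (snd t + int K)) * 1))"
proof -
  have "x * phi 1 * psi 1 * rf_x1 ^ K * rf_x2 ^ K =
     (\<Sum>t\<in>S. phi ([:f t:] * monom 1 (nat (fst t + int K)) * 1)
        * psi (monom 1 (nat (snd t + int K)) * 1))"
    unfolding x sum_distrib_right
  proof (rule sum.cong[OF refl])
    fix t assume tS: "t \<in> S"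
    obtain i j where t: "t = (i, j)" by (cases t)
    from B tS t have bi: "\<bar>i\<bar> \<le> int K" and bj: "\<bar>j\<bar> \<le> int K" by auto
    have e2: "rf_x1 powi i * rf_x1 ^ K = (rf_x1 :: 'a ratfun2) ^ nat (i + int K)"
      using bi by (intro powi_comb rf_x1_ne0) arith
    have e3: "rf_x2 powi j * rf_x2 ^ K = (rf_x2 :: 'a ratfun2) ^ nat (j + int K)"
      using bj by (intro powi_comb rf_x2_ne0) arith
    have "(case t of (i, j) \<Rightarrow> rf_const (f (i, j)) * rf_x1 powi i * rf_x2 powi j)
          * phi 1 * psi 1 * rf_x1 ^ K * rf_x2 ^ K
        = rf_const (f (i, j)) * (rf_x1 powi i * rf_x1 ^ K) * (rf_x2 powi j * rf_x2 ^ K)"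
      unfolding t prod.case psi_1 phi_1 by (simp only: ac_simps mult_1_right mult_1_left)
    also have "\<dots> = phi ([:f t:] * monom 1 (nat (fst t + int K)) * 1)
        * psi (monom 1 (nat (snd t + int K)) * 1)"
      unfolding e2 e3 t fst_conv snd_conv
      by (simp only: phi_mult psi_mult phi_monom psi_monom rf_const_phi[symmetric] psi_1 phi_1
           mult_1_right)
    finally show "(case t of (i, j) \<Rightarrow> rf_const (f (i, j)) * rf_x1 powi i * rf_x2 powi j)
          * phi 1 * psi 1 * rf_x1 ^ K * rf_x2 ^ K = phi ([:f t:] * monom 1 (nat (fst t + int K)) * 1)
        * psi (monom 1 (nat (snd t + int K)) * 1)" .
  qed
  also have "\<dots> = to_fract (\<Sum>t\<in>S. [:[:f t:] * monom 1 (nat (fst t + int K)) * 1:]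
        * L2 (monom 1 (nat (snd t + int K)) * 1))"
    by (simp only: to_fract_sum to_fract_term)
  finally show ?thesis .
qed

lemma rhs2:
  fixes f :: "int \<times> int \<Rightarrow> 'a::idom" and x :: "'a ratfun2"
  assumes x: "x = (\<Sum>(i, j)\<in>S. rf_const (f (i, j)) * rf_x2 powi i * (psi P / rf_x1) powi j)"
    and P: "P \<noteq> 0" and B: "\<forall>(i, j)\<in>S. \<bar>i\<bar> \<le> int K \<and> \<bar>j\<bar> \<le> int K"
  shows "x * phi 1 * psi (P ^ K) * rf_x1 ^ K * rf_x2 ^ K =
    to_fract (\<Sum>t\<in>S. [:[:f t:] * monom 1 (nat (int K - snd t)) * 1:]
        * L2 (monom 1 (nat (fst t + int K)) * P ^ nat (snd t + int K)))"
proof -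
  have "x * phi 1 * psi (P ^ K) * rf_x1 ^ K * rf_x2 ^ K =
     (\<Sum>t\<in>S. phi ([:f t:] * monom 1 (nat (int K - snd t)) * 1)
        * psi (monom 1 (nat (fst t + int K)) * P ^ nat (snd t + int K)))"
    unfolding x sum_distrib_right
  proof (rule sum.cong[OF refl])
    fix t assume tS: "t \<in> S"
    obtain i j where t: "t = (i, j)" by (cases t)
    from B tS t have bi: "\<bar>i\<bar> \<le> int K" and bj: "\<bar>j\<bar> \<le> int K" by auto
    have ph: "psi P \<noteq> 0" using P by (simp add: psi_eq0)
    have e1: "psi P powi j * psi P ^ K = psi P ^ nat (j + int K)"
      using bj by (intro powi_comb ph) arith
    have e2: "rf_x2 powi i * rf_x2 ^ K = (rf_x2 :: 'a ratfun2) ^ nat (i + int K)"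
      using bi by (intro powi_comb rf_x2_ne0) arith
    have e3: "rf_x1 powi (- j) * rf_x1 ^ K = (rf_x1 :: 'a ratfun2) ^ nat (- j + int K)"
      using bj by (intro powi_comb rf_x1_ne0) arith
    have "(case t of (i, j) \<Rightarrow> rf_const (f (i, j)) * rf_x2 powi i * (psi P / rf_x1) powi j)
          * phi 1 * psi (P ^ K) * rf_x1 ^ K * rf_x2 ^ K
        = rf_const (f (i, j)) * (psi P powi j * psi P ^ K) * (rf_x2 powi i * rf_x2 ^ K)
           * (rf_x1 powi (- j) * rf_x1 ^ K)"
      unfolding t prod.case div_powi phi_1 psi_power by (simp only: ac_simps mult_1_right mult_1_left)
    also have "\<dots> = phi ([:f t:] * monom 1 (nat (int K - snd t)) * 1)
        * psi (monom 1 (nat (fst t + int K)) * P ^ nat (snd t + int K))"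
      unfolding e1 e2 e3 t fst_conv snd_conv
      by (simp only: phi_mult psi_mult phi_monom psi_monom psi_power rf_const_phi[symmetric] phi_1
           mult_1_right) (simp add: ac_simps)
    finally show "(case t of (i, j) \<Rightarrow> rf_const (f (i, j)) * rf_x2 powi i * (psi P / rf_x1) powi j)
          * phi 1 * psi (P ^ K) * rf_x1 ^ K * rf_x2 ^ K = phi ([:f t:] * monom 1 (nat (int K - snd t)) * 1)
        * psi (monom 1 (nat (fst t + int K)) * P ^ nat (snd t + int K))" .
  qed
  also have "\<dots> = to_fract (\<Sum>t\<in>S. [:[:f t:] * monom 1 (nat (int K - snd t)) * 1:]
        * L2 (monom 1 (nat (fst t + int K)) * P ^ nat (snd t + int K)))"
    by (simp only: to_fract_sum to_fract_term)
  finally show ?thesis .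
qed



lemma coeff_cm: "coeff ([:c:] * monom 1 m * W) s = coeff (smult c (monom 1 m * W)) s"
  by (simp add: mult.assoc)

lemma sideC:
  fixes c :: "nat \<Rightarrow> nat \<Rightarrow> 'a::linordered_field" and f :: "int \<times> int \<Rightarrow> 'a"
  assumes H: "(\<Sum>t\<in>Sc. [:[:c (fst t) (snd t):] * monom 1 (fst t + K1) * 1:] * L2 (monom 1 (snd t + K2) * 1))
     = (\<Sum>t\<in>S. [:[:f t:] * monom 1 (nat (fst t + int K)) * 1:] * L2 (monom 1 (nat (snd t + int K)) * 1))"
    and Sc: "Sc = {(p, q). c p q \<noteq> 0}" and fSc: "finite Sc" and fS: "finite S" and fnn: "\<forall>t\<in>S. f t \<ge> 0"
  shows "c p q \<ge> 0"
proof -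
  have "coeff (coeff (\<Sum>t\<in>Sc. [:[:c (fst t) (snd t):] * monom 1 (fst t + K1) * 1:] * L2 (monom 1 (snd t + K2) * 1)) (q + K2)) (p + K1)
      = coeff (coeff (\<Sum>t\<in>S. [:[:f t:] * monom 1 (nat (fst t + int K)) * 1:] * L2 (monom 1 (nat (snd t + int K)) * 1)) (q + K2)) (p + K1)"
    using H by simp
  hence E: "(\<Sum>t\<in>Sc. c (fst t) (snd t) * ((if fst t = p then 1 else 0) * (if snd t = q then 1 else 0))) =
     (\<Sum>t\<in>S. f t * ((if nat (fst t + int K) = p + K1 then 1 else 0) *
         (if nat (snd t + int K) = q + K2 then 1 else 0)))"
    unfolding key_coeff_sum by (simp add: mult.assoc coeff_monom)
  have "(\<Sum>t\<in>Sc. c (fst t) (snd t) * ((if fst t = p then 1 else 0) * (if snd t = q then 1 else 0)))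
      = (\<Sum>t\<in>Sc. if t = (p, q) then c p q else 0)"
    by (rule sum.cong) auto
  also have "\<dots> = (if (p, q) \<in> Sc then c p q else 0)" using fSc by simp
  also have "\<dots> = c p q" by (auto simp: Sc)
  finally have L: "(\<Sum>t\<in>Sc. c (fst t) (snd t) * ((if fst t = p then 1 else 0) * (if snd t = q then 1 else 0))) = c p q" .
  have "(\<Sum>t\<in>S. f t * ((if nat (fst t + int K) = p + K1 then 1 else 0) *
         (if nat (snd t + int K) = q + K2 then 1 else 0))) \<ge> 0"
    using fnn by (intro sum_nonneg) simp
  thus ?thesis using E L by simp
qed

lemma sideA:
  fixes c :: "nat \<Rightarrow> nat \<Rightarrow> 'a::linordered_field" and f :: "int \<times> int \<Rightarrow> 'a" and P :: "'a poly"
  assumes H: "(\<Sum>t\<in>Sc. [:[:c (fst t) (snd t):] * monom 1 (fst t + nat (int K - a1)) * P ^ K:]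
                   * L2 (monom 1 (snd t + nat (int K - a2)) * 1))
     = (\<Sum>t\<in>S. [:[:f t:] * P ^ nat (fst t + int K) * monom 1 (nat (snd t + int K)):]
                   * L2 (monom 1 (nat (int K - fst t)) * 1))"
    and Sc: "Sc = {(p, q). c p q \<noteq> 0}" and fSc: "finite Sc" and fS: "finite S"
    and fnn: "\<forall>t\<in>S. f t \<ge> 0" and B: "\<forall>t\<in>S. \<bar>fst t\<bar> \<le> int K"
    and a2K: "a2 \<le> int K" and nK: "a2 - int q + int K \<ge> 0" and P0: "coeff P 0 = 1"
  shows "(\<Sum>k=1..p. \<Sum>ks\<in>compositions (degree P) k.
        (-1) ^ (k - 1) * cext c (int p - int (\<Sum>i=1..degree P. i * ks i)) (int q)
        * (\<Prod>i=1..degree P. coeff P i ^ ks i)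
        * multinom (a2 - int q + int k - 1) (degree P) ks) \<le> c p q"
proof -
  define n where "n = a2 - int q"
  define K1 where "K1 = nat (int K - a1)"
  define K2 where "K2 = nat (int K - a2)"
  define polyL where "polyL = (\<Sum>t\<in>Sc. if snd t = q then [:c (fst t) (snd t):] * monom 1 (fst t + K1) * P ^ K else 0)"
  define polyR where "polyR = (\<Sum>t\<in>S. if fst t = n then [:f t:] * P ^ nat (fst t + int K) * monom 1 (nat (snd t + int K)) else 0)"
  have LR: "polyL = polyR"
  proof (rule poly_eqI)
    fix s
    have "coeff (coeff (\<Sum>t\<in>Sc. [:[:c (fst t) (snd t):] * monom 1 (fst t + nat (int K - a1)) * P ^ K:]
                   * L2 (monom 1 (snd t + nat (int K - a2)) * 1)) (q + K2)) s
       = coeff (coeff (\<Sum>t\<in>S. [:[:f t:] * P ^ nat (fst t + int K) * monom 1 (nat (snd t + int K)):]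
                   * L2 (monom 1 (nat (int K - fst t)) * 1)) (q + K2)) s" using H by simp
    hence E: "(\<Sum>t\<in>Sc. coeff ([:c (fst t) (snd t):] * monom 1 (fst t + K1) * P ^ K) s * coeff (monom 1 (snd t + K2) * 1) (q + K2))
       = (\<Sum>t\<in>S. coeff ([:f t:] * P ^ nat (fst t + int K) * monom 1 (nat (snd t + int K))) s * coeff (monom 1 (nat (int K - fst t)) * 1) (q + K2))"
      unfolding key_coeff_sum K1_def K2_def .
    have A1: "(\<Sum>t\<in>Sc. coeff ([:c (fst t) (snd t):] * monom 1 (fst t + K1) * P ^ K) s * coeff (monom 1 (snd t + K2) * 1) (q + K2))
        = coeff polyL s"
      unfolding polyL_def coeff_sum by (rule sum.cong[OF refl]) simp
    have A2: "(\<Sum>t\<in>S. coeff ([:f t:] * P ^ nat (fst t + int K) * monom 1 (nat (snd t + int K))) s * coeff (monom 1 (nat (int K - fst t)) * 1) (q + K2))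
        = coeff polyR s"
      unfolding polyR_def coeff_sum
    proof (rule sum.cong[OF refl])
      fix t assume "t \<in> S"
      with B have "\<bar>fst t\<bar> \<le> int K" by auto
      hence "(nat (int K - fst t) = q + K2) = (fst t = n)" using a2K unfolding K2_def n_def by auto
      thus "coeff ([:f t:] * P ^ nat (fst t + int K) * monom 1 (nat (snd t + int K))) s * coeff (monom 1 (nat (int K - fst t)) * 1) (q + K2)
          = coeff (if fst t = n then [:f t:] * P ^ nat (fst t + int K) * monom 1 (nat (snd t + int K)) else 0) s"
        by simp
    qed
    show "coeff polyL s = coeff polyR s" using E A1 A2 by simp
  qed
  define Apoly where "Apoly = (\<Sum>t\<in>Sc. if snd t = q then monom (c (fst t) (snd t)) (fst t) else 0)"
  define Dpoly where "Dpoly = (\<Sum>t\<in>S. if fst t = n then monom (f t) (nat (snd t + int K)) else 0)"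
  have L': "polyL = monom 1 K1 * P ^ K * Apoly"
    unfolding polyL_def Apoly_def sum_distrib_left
    by (rule sum.cong[OF refl]) (simp add: mult_monom smult_monom ac_simps)
  have R': "polyR = P ^ nat (n + int K) * Dpoly"
    unfolding polyR_def Dpoly_def sum_distrib_left
    by (rule sum.cong[OF refl]) (simp add: mult_smult_right[symmetric] smult_monom)
  have Af: "fps_of_poly Apoly = Abs_fps (\<lambda>p. c p q)"
  proof (rule fps_ext)
    fix m
    have "coeff Apoly m = (\<Sum>t\<in>Sc. if t = (m, q) then c m q else 0)"
      unfolding Apoly_def coeff_sum by (rule sum.cong) auto
    also have "\<dots> = c m q" using fSc by (auto simp: Sc)
    finally show "fps_of_poly Apoly $ m = Abs_fps (\<lambda>p. c p q) $ m" by simp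
  qed
  have Dnn: "\<forall>i. fps_of_poly Dpoly $ i \<ge> 0"
    using fnn by (auto simp: Dpoly_def coeff_sum intro!: sum_nonneg)
  have eq: "fps_X ^ K1 * fps_of_poly P ^ K * Abs_fps (\<lambda>p. c p q) = fps_of_poly P ^ nat (n + int K) * fps_of_poly Dpoly"
    using arg_cong[OF LR, of fps_of_poly] unfolding L' R'
    by (simp add: fps_of_poly_mult fps_of_poly_power fps_of_poly_monom' Af)
  have nK': "n + int K \<ge> 0" using nK by (simp add: n_def)
  note main = abstract_ineq[OF P0 Dnn nK' eq, of p]
  have cv: "(-1) ^ (k - 1) * cext c (int p - int (\<Sum>i=1..degree P. i * ks i)) (int q)
        * (\<Prod>i=1..degree P. coeff P i ^ ks i) * multinom (a2 - int q + int k - 1) (degree P) ks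
      = (-1) ^ (k - 1) * (if int p - int (\<Sum>i=1..degree P. i * ks i) < 0 then 0
                          else c (nat (int p - int (\<Sum>i=1..degree P. i * ks i))) q)
        * (\<Prod>i=1..degree P. coeff P i ^ ks i) * multinom (n + int k - 1) (degree P) ks" for k ks
    by (simp only: cext_def n_def) simp
  show ?thesis using main by (simp only: cv)
qed

lemma sideB:
  fixes c :: "nat \<Rightarrow> nat \<Rightarrow> 'a::linordered_field" and f :: "int \<times> int \<Rightarrow> 'a" and P :: "'a poly"
  assumes H: "(\<Sum>t\<in>Sc. [:[:c (fst t) (snd t):] * monom 1 (fst t + nat (int K - a1)) * 1:]
                   * L2 (monom 1 (snd t + nat (int K - a2)) * P ^ K))
     = (\<Sum>t\<in>S. [:[:f t:] * monom 1 (nat (int K - snd t)) * 1:]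
                   * L2 (monom 1 (nat (fst t + int K)) * P ^ nat (snd t + int K)))"
    and Sc: "Sc = {(p, q). c p q \<noteq> 0}" and fSc: "finite Sc" and fS: "finite S"
    and fnn: "\<forall>t\<in>S. f t \<ge> 0" and B: "\<forall>t\<in>S. \<bar>snd t\<bar> \<le> int K"
    and a1K: "a1 \<le> int K" and nK: "a1 - int p + int K \<ge> 0" and P0: "coeff P 0 = 1"
  shows "(\<Sum>l=1..q. \<Sum>ls\<in>compositions (degree P) l.
        (-1) ^ (l - 1) * cext c (int p) (int q - int (\<Sum>i=1..degree P. i * ls i))
        * (\<Prod>i=1..degree P. coeff P i ^ ls i)
        * multinom (a1 - int p + int l - 1) (degree P) ls) \<le> c p q"
proof -
  define n where "n = a1 - int p"
  define K1 where "K1 = nat (int K - a1)"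
  define K2 where "K2 = nat (int K - a2)"
  define polyL where "polyL = (\<Sum>t\<in>Sc. if fst t = p then smult (c (fst t) (snd t)) (monom 1 (snd t + K2) * P ^ K) else 0)"
  define polyR where "polyR = (\<Sum>t\<in>S. if snd t = n then smult (f t) (monom 1 (nat (fst t + int K)) * P ^ nat (snd t + int K)) else 0)"
  have LR: "polyL = polyR"
  proof (rule poly_eqI)
    fix e
    have "coeff (coeff (\<Sum>t\<in>Sc. [:[:c (fst t) (snd t):] * monom 1 (fst t + nat (int K - a1)) * 1:]
                   * L2 (monom 1 (snd t + nat (int K - a2)) * P ^ K)) e) (p + K1)
       = coeff (coeff (\<Sum>t\<in>S. [:[:f t:] * monom 1 (nat (int K - snd t)) * 1:]
                   * L2 (monom 1 (nat (fst t + int K)) * P ^ nat (snd t + int K))) e) (p + K1)" using H by simp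
    hence E: "(\<Sum>t\<in>Sc. coeff ([:c (fst t) (snd t):] * monom 1 (fst t + K1) * 1) (p + K1) * coeff (monom 1 (snd t + K2) * P ^ K) e)
       = (\<Sum>t\<in>S. coeff ([:f t:] * monom 1 (nat (int K - snd t)) * 1) (p + K1) * coeff (monom 1 (nat (fst t + int K)) * P ^ nat (snd t + int K)) e)"
      unfolding key_coeff_sum K1_def K2_def .
    have A1: "(\<Sum>t\<in>Sc. coeff ([:c (fst t) (snd t):] * monom 1 (fst t + K1) * 1) (p + K1) * coeff (monom 1 (snd t + K2) * P ^ K) e)
        = coeff polyL e"
      unfolding polyL_def coeff_sum by (rule sum.cong[OF refl]) simp
    have A2: "(\<Sum>t\<in>S. coeff ([:f t:] * monom 1 (nat (int K - snd t)) * 1) (p + K1) * coeff (monom 1 (nat (fst t + int K)) * P ^ nat (snd t + int K)) e)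
        = coeff polyR e"
      unfolding polyR_def coeff_sum
    proof (rule sum.cong[OF refl])
      fix t assume "t \<in> S"
      with B have "\<bar>snd t\<bar> \<le> int K" by auto
      hence "(nat (int K - snd t) = p + K1) = (snd t = n)" using a1K unfolding K1_def n_def by auto
      thus "coeff ([:f t:] * monom 1 (nat (int K - snd t)) * 1) (p + K1) * coeff (monom 1 (nat (fst t + int K)) * P ^ nat (snd t + int K)) e
          = coeff (if snd t = n then smult (f t) (monom 1 (nat (fst t + int K)) * P ^ nat (snd t + int K)) else 0) e"
        by simp
    qed
    show "coeff polyL e = coeff polyR e" using E A1 A2 by simp
  qed
  define Apoly where "Apoly = (\<Sum>t\<in>Sc. if fst t = p then monom (c (fst t) (snd t)) (snd t) else 0)"
  define Dpoly where "Dpoly = (\<Sum>t\<in>S. if snd t = n then monom (f t) (nat (fst t + int K)) else 0)"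
  have L': "polyL = monom 1 K2 * P ^ K * Apoly"
    unfolding polyL_def Apoly_def sum_distrib_left
    by (rule sum.cong[OF refl]) (simp add: mult_monom smult_monom mult_smult_right[symmetric] ac_simps)
  have R': "polyR = P ^ nat (n + int K) * Dpoly"
    unfolding polyR_def Dpoly_def sum_distrib_left
    by (rule sum.cong[OF refl]) (simp add: mult_smult_right[symmetric] smult_monom ac_simps)
  have Af: "fps_of_poly Apoly = Abs_fps (\<lambda>q. c p q)"
  proof (rule fps_ext)
    fix m
    have "coeff Apoly m = (\<Sum>t\<in>Sc. if t = (p, m) then c p m else 0)"
      unfolding Apoly_def coeff_sum by (rule sum.cong) auto
    also have "\<dots> = c p m" using fSc by (auto simp: Sc)
    finally show "fps_of_poly Apoly $ m = Abs_fps (\<lambda>q. c p q) $ m" by simp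
  qed
  have Dnn: "\<forall>i. fps_of_poly Dpoly $ i \<ge> 0"
    using fnn by (auto simp: Dpoly_def coeff_sum intro!: sum_nonneg)
  have eq: "fps_X ^ K2 * fps_of_poly P ^ K * Abs_fps (\<lambda>q. c p q) = fps_of_poly P ^ nat (n + int K) * fps_of_poly Dpoly"
    using arg_cong[OF LR, of fps_of_poly] unfolding L' R'
    by (simp add: fps_of_poly_mult fps_of_poly_power fps_of_poly_monom' Af)
  have nK': "n + int K \<ge> 0" using nK by (simp add: n_def)
  note main = abstract_ineq[OF P0 Dnn nK' eq, of q]
  have cv: "(-1) ^ (l - 1) * cext c (int p) (int q - int (\<Sum>i=1..degree P. i * ls i))
        * (\<Prod>i=1..degree P. coeff P i ^ ls i) * multinom (a1 - int p + int l - 1) (degree P) ls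
      = (-1) ^ (l - 1) * (if int q - int (\<Sum>i=1..degree P. i * ls i) < 0 then 0
                          else c p (nat (int q - int (\<Sum>i=1..degree P. i * ls i))))
        * (\<Prod>i=1..degree P. coeff P i ^ ls i) * multinom (n + int l - 1) (degree P) ls" for l ls
    by (simp only: cext_def n_def) simp
  show ?thesis using main by (simp only: cv)
qed



lemma mpp_facts:
  assumes "monic_palindromic_pos P"
  shows "P \<noteq> 0" "coeff P 0 = 1"
proof -
  from assms have l: "lead_coeff P = 1" and pal: "\<forall>i\<le>degree P. coeff P i = coeff P (degree P - i)"
    unfolding monic_palindromic_pos_def by blast+
  show "P \<noteq> 0" using l by auto
  show "coeff P 0 = 1" using pal[rule_format, of 0] l by simp
qed

lemma finite_bound:
  assumes "finite (S :: (int \<times> int) set)"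
  shows "\<exists>B\<ge>0. \<forall>t\<in>S. \<bar>fst t\<bar> \<le> B \<and> \<bar>snd t\<bar> \<le> B"
proof (intro exI conjI ballI)
  let ?B = "\<Sum>t\<in>S. \<bar>fst t\<bar> + \<bar>snd t\<bar>"
  show "?B \<ge> 0" by (intro sum_nonneg) auto
  fix t assume "t \<in> S"
  hence "\<bar>fst t\<bar> + \<bar>snd t\<bar> \<le> ?B" using assms by (intro member_le_sum) auto
  thus "\<bar>fst t\<bar> \<le> ?B" "\<bar>snd t\<bar> \<le> ?B" by auto
qed

theorem proposition2p10:
  fixes P1 P2 :: "'a::linordered_field poly"
    and a1 a2 :: int
    and c :: "nat \<Rightarrow> nat \<Rightarrow> 'a"
    and x :: "'a ratfun2"
  assumes P1: "monic_palindromic_pos P1"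
    and P2: "monic_palindromic_pos P2"
    and c_fin: "finite {(p, q). c p q \<noteq> 0}"
    and c_in: "\<forall>p q. c p q \<in> coeff_alg P1 P2"
    and c00: "c 0 0 = 1"
    and x_def: "x = rf_x1 powi (- a1) * rf_x2 powi (- a2) *
                    (\<Sum>(p, q)\<in>{(p, q). c p q \<noteq> 0}. rf_const (c p q) * rf_x1 ^ p * rf_x2 ^ q)"
    and T0: "in_laurent P1 P2 (coeff_alg_nonneg P1 P2) 0 x"
    and T1: "in_laurent P1 P2 (coeff_alg_nonneg P1 P2) 1 x"
    and T2: "in_laurent P1 P2 (coeff_alg_nonneg P1 P2) 2 x"
  shows "\<forall>p q. c p q \<ge> max
     (pos_part (\<Sum>k=1..p. \<Sum>ks\<in>compositions (degree P2) k.
        (-1) ^ (k - 1) * cext c (int p - int (\<Sum>i=1..degree P2. i * ks i)) (int q)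
        * (\<Prod>i=1..degree P2. coeff P2 i ^ ks i)
        * multinom (a2 - int q + int k - 1) (degree P2) ks))
     (pos_part (\<Sum>l=1..q. \<Sum>ls\<in>compositions (degree P1) l.
        (-1) ^ (l - 1) * cext c (int p) (int q - int (\<Sum>i=1..degree P1. i * ls i))
        * (\<Prod>i=1..degree P1. coeff P1 i ^ ls i)
        * multinom (a1 - int p + int l - 1) (degree P1) ls))"
proof (intro allI)
  fix p q
  define Sc where "Sc = {(p, q). c p q \<noteq> 0}"
  note x_def' = x_def[folded Sc_def]
  have P1nz: "P1 \<noteq> 0" and P10: "coeff P1 0 = 1" using mpp_facts[OF P1] by auto
  have P2nz: "P2 \<noteq> 0" and P20: "coeff P2 0 = 1" using mpp_facts[OF P2] by auto
  obtain f0 where fin0: "finite {e. f0 e \<noteq> 0}" and in0: "\<forall>e. f0 e \<in> coeff_alg_nonneg P1 P2"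
    and x0: "x = (\<Sum>(i, j)\<in>{e. f0 e \<noteq> 0}. rf_const (f0 (i, j)) * xvar P1 P2 0 powi i * xvar P1 P2 (0 + 1) powi j)"
    using T0 unfolding in_laurent_def by (elim exE conjE) (rule that)
  obtain f1 where fin1: "finite {e. f1 e \<noteq> 0}" and in1: "\<forall>e. f1 e \<in> coeff_alg_nonneg P1 P2"
    and x1: "x = (\<Sum>(i, j)\<in>{e. f1 e \<noteq> 0}. rf_const (f1 (i, j)) * xvar P1 P2 1 powi i * xvar P1 P2 (1 + 1) powi j)"
    using T1 unfolding in_laurent_def by (elim exE conjE) (rule that)
  obtain f2 where fin2: "finite {e. f2 e \<noteq> 0}" and in2: "\<forall>e. f2 e \<in> coeff_alg_nonneg P1 P2"
    and x2: "x = (\<Sum>(i, j)\<in>{e. f2 e \<noteq> 0}. rf_const (f2 (i, j)) * xvar P1 P2 2 powi i * xvar P1 P2 (2 + 1) powi j)"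
    using T2 unfolding in_laurent_def by (elim exE conjE) (rule that)
  define S0 where "S0 = {e. f0 e \<noteq> 0}"
  define S1 where "S1 = {e. f1 e \<noteq> 0}"
  define S2 where "S2 = {e. f2 e \<noteq> 0}"
  have x0': "x = (\<Sum>(i, j)\<in>S0. rf_const (f0 (i, j)) * (phi P2 / rf_x2) powi i * rf_x1 powi j)"
    using x0 by (simp add: xvar0 xvar1 S0_def)
  have x1': "x = (\<Sum>(i, j)\<in>S1. rf_const (f1 (i, j)) * rf_x1 powi i * rf_x2 powi j)"
    using x1 by (simp add: xvar1 xvar2 S1_def)
  have x2': "x = (\<Sum>(i, j)\<in>S2. rf_const (f2 (i, j)) * rf_x2 powi i * (psi P1 / rf_x1) powi j)"
    using x2 by (simp add: xvar2 xvar3 S2_def)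
  have nn0: "\<forall>t\<in>S0. f0 t \<ge> 0" using in0 by (auto simp: coeff_alg_nonneg_def)
  have nn1: "\<forall>t\<in>S1. f1 t \<ge> 0" using in1 by (auto simp: coeff_alg_nonneg_def)
  have nn2: "\<forall>t\<in>S2. f2 t \<ge> 0" using in2 by (auto simp: coeff_alg_nonneg_def)
  have finS: "finite (S0 \<union> S1 \<union> S2)" using fin0 fin1 fin2 by (simp add: S0_def S1_def S2_def)
  obtain B where B: "\<forall>t\<in>S0 \<union> S1 \<union> S2. \<bar>fst t\<bar> \<le> B \<and> \<bar>snd t\<bar> \<le> B" and B0: "B \<ge> 0"
    using finite_bound[OF finS] by blast
  define K where "K = nat (B + \<bar>a1\<bar> + \<bar>a2\<bar> + int p + int q)"
  have Kge: "int K = B + \<bar>a1\<bar> + \<bar>a2\<bar> + int p + int q" using B0 by (simp add: K_def)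
  have a1K: "a1 \<le> int K" and a2K: "a2 \<le> int K" using Kge B0 by auto
  have BK: "\<forall>(i, j)\<in>S. \<bar>i\<bar> \<le> int K \<and> \<bar>j\<bar> \<le> int K" if SS: "S \<subseteq> S0 \<union> S1 \<union> S2" for S
  proof (intro ballI, clarify)
    fix i j assume "(i, j) \<in> S"
    with SS have "(i, j) \<in> S0 \<union> S1 \<union> S2" by blast
    with B have "\<bar>fst (i, j)\<bar> \<le> B \<and> \<bar>snd (i, j)\<bar> \<le> B" by blast
    hence "\<bar>i\<bar> \<le> B \<and> \<bar>j\<bar> \<le> B" by simp
    thus "\<bar>i\<bar> \<le> int K \<and> \<bar>j\<bar> \<le> int K" using Kge by linarith
  qed
  have BK0: "\<forall>(i, j)\<in>S0. \<bar>i\<bar> \<le> int K \<and> \<bar>j\<bar> \<le> int K" by (rule BK) auto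
  have BK1: "\<forall>(i, j)\<in>S1. \<bar>i\<bar> \<le> int K \<and> \<bar>j\<bar> \<le> int K" by (rule BK) auto
  have BK2: "\<forall>(i, j)\<in>S2. \<bar>i\<bar> \<le> int K \<and> \<bar>j\<bar> \<le> int K" by (rule BK) auto
  have finS0: "finite S0" and finS2: "finite S2" using fin0 fin2 by (simp_all add: S0_def S2_def)
  have bnd0: "\<forall>t\<in>S0. \<bar>fst t\<bar> \<le> int K"
  proof
    fix t assume "t \<in> S0" then show "\<bar>fst t\<bar> \<le> int K" using BK0 by (cases t) auto
  qed
  have bnd2: "\<forall>t\<in>S2. \<bar>snd t\<bar> \<le> int K"
  proof
    fix t assume "t \<in> S2" then show "\<bar>snd t\<bar> \<le> int K" using BK2 by (cases t) auto
  qed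
  have nKA: "a2 - int q + int K \<ge> 0" using Kge B0 abs_ge_self[of a2] abs_ge_zero[of a1] by linarith
  have nKB: "a1 - int p + int K \<ge> 0" using Kge B0 abs_ge_self[of a1] abs_ge_zero[of a2] by linarith
  have HC: "to_fract (\<Sum>t\<in>Sc. [:[:c (fst t) (snd t):] * monom 1 (fst t + nat (int K - a1)) * 1:]
                       * L2 (monom 1 (snd t + nat (int K - a2)) * 1))
    = to_fract (\<Sum>t\<in>S1. [:[:f1 t:] * monom 1 (nat (fst t + int K)) * 1:]
        * L2 (monom 1 (nat (snd t + int K)) * 1))"
    by (rule trans[OF sym[OF lhs_expand[OF x_def' a1K a2K, of 1 1]] rhs1[OF x1' BK1]])
  have cnn: "c p q \<ge> 0"
    by (rule sideC[OF HC[unfolded to_fract_eq_iff] Sc_def c_fin[folded Sc_def] _ nn1])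
       (simp add: S1_def fin1)
  have HA: "to_fract (\<Sum>t\<in>Sc. [:[:c (fst t) (snd t):] * monom 1 (fst t + nat (int K - a1)) * P2 ^ K:]
                       * L2 (monom 1 (snd t + nat (int K - a2)) * 1))
    = to_fract (\<Sum>t\<in>S0. [:[:f0 t:] * P2 ^ nat (fst t + int K) * monom 1 (nat (snd t + int K)):]
        * L2 (monom 1 (nat (int K - fst t)) * 1))"
    by (rule trans[OF sym[OF lhs_expand[OF x_def' a1K a2K, of "P2 ^ K" 1]] rhs0[OF x0' P2nz BK0]])
  have ineqA: "(\<Sum>k=1..p. \<Sum>ks\<in>compositions (degree P2) k.
        (-1) ^ (k - 1) * cext c (int p - int (\<Sum>i=1..degree P2. i * ks i)) (int q)
        * (\<Prod>i=1..degree P2. coeff P2 i ^ ks i)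
        * multinom (a2 - int q + int k - 1) (degree P2) ks) \<le> c p q"
    by (rule sideA[OF HA[unfolded to_fract_eq_iff] Sc_def c_fin[folded Sc_def] finS0 nn0 bnd0 a2K nKA P20])
  have HB: "to_fract (\<Sum>t\<in>Sc. [:[:c (fst t) (snd t):] * monom 1 (fst t + nat (int K - a1)) * 1:]
                       * L2 (monom 1 (snd t + nat (int K - a2)) * P1 ^ K))
    = to_fract (\<Sum>t\<in>S2. [:[:f2 t:] * monom 1 (nat (int K - snd t)) * 1:]
        * L2 (monom 1 (nat (fst t + int K)) * P1 ^ nat (snd t + int K)))"
    by (rule trans[OF sym[OF lhs_expand[OF x_def' a1K a2K, of 1 "P1 ^ K"]] rhs2[OF x2' P1nz BK2]])
  have ineqB: "(\<Sum>l=1..q. \<Sum>ls\<in>compositions (degree P1) l.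
        (-1) ^ (l - 1) * cext c (int p) (int q - int (\<Sum>i=1..degree P1. i * ls i))
        * (\<Prod>i=1..degree P1. coeff P1 i ^ ls i)
        * multinom (a1 - int p + int l - 1) (degree P1) ls) \<le> c p q"
    by (rule sideB[OF HB[unfolded to_fract_eq_iff] Sc_def c_fin[folded Sc_def] finS2 nn2 bnd2 a1K nKB P10])
  show "c p q \<ge> max
     (pos_part (\<Sum>k=1..p. \<Sum>ks\<in>compositions (degree P2) k.
        (-1) ^ (k - 1) * cext c (int p - int (\<Sum>i=1..degree P2. i * ks i)) (int q)
        * (\<Prod>i=1..degree P2. coeff P2 i ^ ks i)
        * multinom (a2 - int q + int k - 1) (degree P2) ks))
     (pos_part (\<Sum>l=1..q. \<Sum>ls\<in>compositions (degree P1) l.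
        (-1) ^ (l - 1) * cext c (int p) (int q - int (\<Sum>i=1..degree P1. i * ls i))
        * (\<Prod>i=1..degree P1. coeff P1 i ^ ls i)
        * multinom (a1 - int p + int l - 1) (degree P1) ls))"
    using ineqA ineqB cnn by (simp add: pos_part_def)
qed


end
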